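(* Consider the draining problem described in the context, with data $x\in\mathbb{R}^2$, $r>0$, $B>A$, $s^\varphi, s^\psi\in\mathbb{R}^2$ and $\check R$. Let $(u^\ast,T^\ast)$ be an optimal solution, with optimal cost $T^\ast$, state trajectory $s^\ast$ and uncertainty trajectory $R^\ast$. Let $t_0\in(0,T^\ast)$ be any time such that $R^\ast(t_0)=0$. Then $$u^\ast(t)=\frac{s^\psi-s^\ast(t_0)}{\|s^\psi-s^\ast(t_0)\|}\quad\text{for all } t\in(t_0,T^\ast).$$
   Context: $\|\cdot\|$ is the Euclidean norm. A single target sits at the fixed position $x\in\mathbb{R}^2$, with sensing range $r>0$ and constants $A,B$ with $B>A$ (uncertainty accumulation rate $A$). The agent has position $s(t)\in\mathbb{R}^2$ with dynamics $\dot s(t)=u(t)$ and control constraint $\|u(t)\|\le 1$. Define the sensing function $p(s)=\max\{0,\,1-\|s-x\|^2/r^2\}$ and the uncertainty dynamics $\dot R=f_R(R,s)$, where $f_R(R,s)=0$ if $R=0$ and $A-Bp(s)<0$, and $f_R(R,s)=A-Bp(s)$ otherwise. The entrance point $s^\varphi$ and the departure point $s^\psi$ are the points where the agent starts, respectively stops, sensing the target. $\check R$ is the uncertainty at arrival. The draining problem is the optimal control problem: minimize $\int_0^T \mathrm{d}t=T$ over $T$ and controls $u:[0,T]\to\mathbb{R}^2$ subject to $\dot s=u$, $\dot R=f_R(R,s)$, $\|u(t)\|^2\le1$, $\min_{\tau\in[0,T]}R(\tau)=0$, $s(0)=s^\varphi$, $s(T)=s^\psi$, $R(0)=\check R$.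 A control law is feasible if it satisfies all these constraints; an optimal trajectory is one generated by a minimizer. *)

theory Defs
  imports "HOL-Analysis.Analysis"
begin

definition sensing :: "real^2 \<Rightarrow> real \<Rightarrow> real^2 \<Rightarrow> real" where
  "sensing x r s = max 0 (1 - (norm (s - x))^2 / r^2)"

definition fR :: "real \<Rightarrow> real \<Rightarrow> real^2 \<Rightarrow> real \<Rightarrow> real \<Rightarrow> real^2 \<Rightarrow> real" where
  "fR A B x r R s =
     (if R = 0 \<and> A - B * sensing x r s < 0 then 0 else A - B * sensing x r s)"

text \<open>Feasibility of (T, u) for the draining problem, together with the generated
  state trajectory s and uncertainty trajectory R (Caratheodory / integral sense).\<close>
definition draining_feasible ::
  "real \<Rightarrow> real \<Rightarrow> real^2 \<Rightarrow> real \<Rightarrow> real^2 \<Rightarrow> real^2 \<Rightarrow> real \<Rightarrow>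
   real \<Rightarrow> (real \<Rightarrow> real^2) \<Rightarrow> (real \<Rightarrow> real^2) \<Rightarrow> (real \<Rightarrow> real) \<Rightarrow> bool" where
  "draining_feasible A B x r sphi spsi Rc T u s R \<longleftrightarrow>
     0 \<le> T \<and>
     u absolutely_integrable_on {0..T} \<and>
     (\<forall>t\<in>{0..T}. (norm (u t))^2 \<le> 1) \<and>
     (\<forall>t\<in>{0..T}. s t = sphi + integral {0..t} u) \<and>
     (\<lambda>t. fR A B x r (R t) (s t)) absolutely_integrable_on {0..T} \<and>
     (\<forall>t\<in>{0..T}. R t = Rc + integral {0..t} (\<lambda>\<tau>. fR A B x r (R \<tau>) (s \<tau>))) \<and>
     (\<forall>t\<in>{0..T}. 0 \<le> R t) \<and> (\<exists>t\<in>{0..T}. R t = 0) \<and>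
     s 0 = sphi \<and> s T = spsi \<and> R 0 = Rc"

definition draining_optimal ::
  "real \<Rightarrow> real \<Rightarrow> real^2 \<Rightarrow> real \<Rightarrow> real^2 \<Rightarrow> real^2 \<Rightarrow> real \<Rightarrow>
   real \<Rightarrow> (real \<Rightarrow> real^2) \<Rightarrow> (real \<Rightarrow> real^2) \<Rightarrow> (real \<Rightarrow> real) \<Rightarrow> bool" where
  "draining_optimal A B x r sphi spsi Rc T u s R \<longleftrightarrow>
     draining_feasible A B x r sphi spsi Rc T u s R \<and>
     (\<forall>T' u' s' R'. draining_feasible A B x r sphi spsi Rc T' u' s' R' \<longrightarrow> T \<le> T')"

end

theory Submission
  imports Defs
begin


lemma int_nonneg_open:
  fixes h :: "real \<Rightarrow> real"
  assumes "h integrable_on {m..t}" "\<And>\<tau>. \<tau> \<in> {m<..<t} \<Longrightarrow> h \<tau> \<ge> 0"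
  shows "integral {m..t} h \<ge> 0"
proof -
  have "h integrable_on {m<..<t}" using assms(1) integrable_on_open_interval_real by blast
  then have "integral {m<..<t} h \<ge> 0" using assms(2) by (intro integral_nonneg) auto
  then show ?thesis by (simp add: integral_open_interval_real)
qed

lemma int_nonpos_open:
  fixes h :: "real \<Rightarrow> real"
  assumes "h integrable_on {m..t}" "\<And>\<tau>. \<tau> \<in> {m<..<t} \<Longrightarrow> h \<tau> \<le> 0"
  shows "integral {m..t} h \<le> 0"
proof -
  have "(\<lambda>\<tau>. - h \<tau>) integrable_on {m..t}" using assms(1) by (simp add: integrable_neg)
  then have "integral {m..t} (\<lambda>\<tau>. - h \<tau>) \<ge> 0" using assms(2) by (intro int_nonneg_open) auto
  then show ?thesis by (simp add: integral_neg assms(1))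
qed

definition FF :: "(real \<Rightarrow> real) \<Rightarrow> (real \<Rightarrow> real) \<Rightarrow> real \<Rightarrow> real" where
  "FF h Q \<tau> = (if Q \<tau> = 0 \<and> h \<tau> < 0 then 0 else h \<tau>)"

definition solves :: "(real \<Rightarrow> real) \<Rightarrow> real \<Rightarrow> real \<Rightarrow> real \<Rightarrow> (real \<Rightarrow> real) \<Rightarrow> bool" where
  "solves h m n q Q \<longleftrightarrow> Q m = q \<and> (\<forall>t\<in>{m..n}. Q t \<ge> 0) \<and>
     (\<forall>t\<in>{m..n}. (FF h Q has_integral (Q t - q)) {m..t})"

lemma phase_pos:
  fixes h :: "real \<Rightarrow> real"
  assumes "continuous_on {m..n} h" "\<And>\<tau>. \<tau> \<in> {m<..<n} \<Longrightarrow> h \<tau> \<ge> 0" "q \<ge> 0"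
  shows "\<exists>Q. solves h m n q Q"
proof -
  define Q where "Q t = q + integral {m..t} h" for t
  have hi: "(h has_integral integral {m..t} h) {m..t}" if "t \<in> {m..n}" for t
    using that by (intro integrable_integral integrable_continuous_interval continuous_on_subset[OF assms(1)]) auto
  show ?thesis unfolding solves_def
  proof (intro exI[of _ Q] conjI ballI)
    show "Q m = q" by (simp add: Q_def)
  next
    fix t assume t: "t \<in> {m..n}"
    show "Q t \<ge> 0" unfolding Q_def using hi[OF t] assms(2,3) t
      by (smt (verit, best) greaterThanLessThan_iff has_integral_integrable int_nonneg_open atLeastAtMost_iff)
    show "(FF h Q has_integral (Q t - q)) {m..t}"
    proof (rule has_integral_spike_finite[of "{m,t}" _ _ h])
      show "(h has_integral Q t - q) {m..t}" using hi[OF t] by (simp add: Q_def)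
      fix x assume "x \<in> {m..t} - {m,t}"
      then have "h x \<ge> 0" using assms(2) t by auto
      then show "FF h Q x = h x" by (auto simp: FF_def)
    qed auto
  qed
qed

lemma phase_neg:
  fixes h :: "real \<Rightarrow> real"
  assumes "continuous_on {m..n} h" "\<And>\<tau>. \<tau> \<in> {m<..<n} \<Longrightarrow> h \<tau> \<le> 0" "q \<ge> 0"
  shows "\<exists>Q. solves h m n q Q"
proof -
  define G where "G t = q + integral {m..t} h" for t
  define Q where "Q t = max 0 (G t)" for t
  have hint: "h integrable_on {a..b}" if "m \<le> a" "b \<le> n" for a b
    using that by (intro integrable_continuous_interval continuous_on_subset[OF assms(1)]) auto
  have hi: "(h has_integral integral {a..b} h) {a..b}" if "m \<le> a" "b \<le> n" for a b
    using hint[OF that] by (rule integrable_integral)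
  have Gmono: "G b \<le> G a" if "m \<le> a" "a \<le> b" "b \<le> n" for a b
  proof -
    have "integral {m..a} h + integral {a..b} h = integral {m..b} h"
      using Henstock_Kurzweil_Integration.integral_combine[where a=m and c=a and b=b and f=h] hint[of m b] that by auto
    moreover have "integral {a..b} h \<le> 0"
      using that assms(2) by (intro int_nonpos_open hint) auto
    ultimately show ?thesis by (simp add: G_def)
  qed
  have Gcont: "continuous_on {m..t} G" if "t \<le> n" for t
    unfolding G_def using that
    by (intro continuous_intros indefinite_integral_continuous_1 hint) auto
  show ?thesis unfolding solves_def
  proof (intro exI[of _ Q] conjI ballI)
    show "Q m = q" using assms(3) by (simp add: Q_def G_def)
  next
    fix t assume t: "t \<in> {m..n}"
    show "Q t \<ge> 0" by (simp add: Q_def)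
    show "(FF h Q has_integral (Q t - q)) {m..t}"
    proof (cases "G t > 0")
      case True
      have "(h has_integral Q t - q) {m..t}" using hi[of m t] t True by (simp add: Q_def G_def)
      moreover have "FF h Q x = h x" if "x \<in> {m..t}" for x
      proof -
        have "G x \<ge> G t" using Gmono[of x t] that t by auto
        then show ?thesis using True by (simp add: FF_def Q_def)
      qed
      ultimately show ?thesis by (metis has_integral_eq)
    next
      case False
      have Gm: "G m = q" by (simp add: G_def)
      have "\<exists>x. m \<le> x \<and> x \<le> t \<and> G x = 0"
        by (rule IVT2') (use False Gm assms(3) Gcont[of t] t in auto)
      then obtain z where z: "z \<in> {m..t}" "G z = 0" by auto
      define S where "S = {\<tau> \<in> {m..t}. G \<tau> = 0}"
      have Sne: "S \<noteq> {}" using z by (auto simp: S_def)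
      have Scl: "closed S"
      proof -
        have "closed ({m..t} \<inter> G -` {0})" 
          by (rule continuous_closed_preimage[OF Gcont[of t]]) (use t in auto)
        moreover have "S = {m..t} \<inter> G -` {0}" unfolding S_def by blast
        ultimately show ?thesis by simp
      qed
      have Sbd: "bdd_below S" by (rule bdd_belowI[of _ m]) (auto simp: S_def)
      define c where "c = Inf S"
      have cS: "c \<in> S" unfolding c_def using Scl Sne Sbd closed_contains_Inf by blast
      then have c: "m \<le> c" "c \<le> t" "G c = 0" by (auto simp: S_def)
      have before: "G \<tau> > 0" if "m \<le> \<tau>" "\<tau> < c" for \<tau>
      proof -
        have "G \<tau> \<ge> G c" using Gmono[of \<tau> c] that c t by auto
        moreover have "\<tau> \<notin> S"
        proof
          assume "\<tau> \<in> S"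
          then have "c \<le> \<tau>" using cInf_lower[OF _ Sbd] c_def by simp
          then show False using that by simp
        qed
        ultimately show ?thesis using that c by (auto simp: S_def)
      qed
      have after: "G \<tau> \<le> 0" if "c \<le> \<tau>" "\<tau> \<le> t" for \<tau>
        using Gmono[of c \<tau>] that c t by auto
      have I1: "(FF h Q has_integral (-q)) {m..c}"
      proof (rule has_integral_spike_finite[of "{c}" _ _ h])
        have "integral {m..c} h = - q" using c(3) by (simp add: G_def)
        then show "(h has_integral - q) {m..c}" using hi[of m c] c t by simp
        fix x assume "x \<in> {m..c} - {c}"
        then have "G x > 0" using before by auto
        then show "FF h Q x = h x" by (simp add: FF_def Q_def)
      qed auto
      have I2: "(FF h Q has_integral 0) {c..t}"
      proof (rule has_integral_spike_finite[of "{c,t}" _ _ "\<lambda>_. 0"])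
        fix x assume x: "x \<in> {c..t} - {c,t}"
        then have "G x \<le> 0" using after by auto
        moreover have "h x \<le> 0" using assms(2) x c t by auto
        ultimately show "FF h Q x = 0" by (auto simp: FF_def Q_def)
      qed auto
      have "(FF h Q has_integral (-q + 0)) {m..t}"
        by (rule has_integral_combine[OF c(1,2) I1 I2])
      moreover have "Q t = 0" using False by (simp add: Q_def)
      ultimately show ?thesis by simp
    qed
  qed
qed

lemma concat:
  assumes "m \<le> n" "n \<le> p" "solves h m n q Q1" "solves h n p (Q1 n) Q2"
  shows "\<exists>Q. solves h m p q Q"
proof -
  define Q where "Q t = (if t \<le> n then Q1 t else Q2 t)" for t
  have Q2n: "Q2 n = Q1 n" using assms(4) by (simp add: solves_def)
  have e1: "FF h Q x = FF h Q1 x" if "x \<le> n" for x using that by (simp add: FF_def Q_def)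
  have e2: "FF h Q x = FF h Q2 x" if "n \<le> x" for x using that Q2n
    by (cases "x = n") (auto simp: FF_def Q_def)
  show ?thesis unfolding solves_def
  proof (intro exI[of _ Q] conjI ballI)
    show "Q m = q" using assms by (simp add: Q_def solves_def)
  next
    fix t assume t: "t \<in> {m..p}"
    show "Q t \<ge> 0" using assms t by (auto simp: Q_def solves_def)
    show "(FF h Q has_integral (Q t - q)) {m..t}"
    proof (cases "t \<le> n")
      case True
      then have "(FF h Q1 has_integral (Q1 t - q)) {m..t}" using assms(3) t by (auto simp: solves_def)
      then show ?thesis using True e1 by (simp add: Q_def) (rule has_integral_eq[rotated], auto)
    next
      case False
      have a0: "(FF h Q1 has_integral (Q1 n - q)) {m..n}"
        using assms(1,3) by (auto simp: solves_def)
      have a: "(FF h Q has_integral (Q1 n - q)) {m..n}"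
        by (rule has_integral_eq[OF _ a0]) (use e1 in auto)
      have "(FF h Q2 has_integral (Q2 t - Q1 n)) {n..t}" using assms(4) t False by (auto simp: solves_def)
      then have b: "(FF h Q has_integral (Q2 t - Q1 n)) {n..t}"
        using e2 by (auto intro: has_integral_eq[rotated])
      have "(FF h Q has_integral ((Q1 n - q) + (Q2 t - Q1 n))) {m..t}"
        using has_integral_combine[OF assms(1) _ a b] False by auto
      then show ?thesis using False by (simp add: Q_def)
    qed
  qed
qed

lemma ode_exists:
  fixes h :: "real \<Rightarrow> real"
  assumes ab: "a \<le> b" and hc: "continuous_on {a..b} h"
    and pos: "\<And>\<tau>. \<tau> \<in> {a..b} \<Longrightarrow> \<tau> < c1 \<or> \<tau> > c2 \<Longrightarrow> h \<tau> \<ge> 0"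
    and neg: "\<And>\<tau>. \<tau> \<in> {a..b} \<Longrightarrow> c1 < \<tau> \<Longrightarrow> \<tau> < c2 \<Longrightarrow> h \<tau> \<le> 0"
  shows "\<exists>Q. solves h a b 0 Q"
proof -
  define m1 where "m1 = max a (min b c1)"
  define m2 where "m2 = max m1 (min b c2)"
  have o: "a \<le> m1" "m1 \<le> m2" "m2 \<le> b" using ab by (auto simp: m1_def m2_def)
  obtain Q1 where Q1: "solves h a m1 0 Q1"
    using phase_pos[of a m1 h 0] continuous_on_subset[OF hc] o pos
    by (smt (verit) atLeastAtMost_iff greaterThanLessThan_iff m1_def subsetI)
  have q1: "Q1 m1 \<ge> 0" using Q1 o by (auto simp: solves_def)
  obtain Q2 where Q2: "solves h m1 m2 (Q1 m1) Q2"
    using phase_neg[of m1 m2 h "Q1 m1"] continuous_on_subset[OF hc] o neg q1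
    by (smt (verit) atLeastAtMost_iff greaterThanLessThan_iff m1_def m2_def subsetI)
  obtain Q12 where Q12: "solves h a m2 0 Q12" using concat[OF o(1,2) Q1 Q2] by blast
  have q2: "Q12 m2 \<ge> 0" using Q12 o by (auto simp: solves_def)
  obtain Q3 where Q3: "solves h m2 b (Q12 m2) Q3"
    using phase_pos[of m2 b h "Q12 m2"] continuous_on_subset[OF hc] o pos q2
    by (smt (verit) atLeastAtMost_iff greaterThanLessThan_iff m1_def m2_def subsetI)
  show ?thesis using concat[OF _ o(3) Q12 Q3] o by auto
qed



lemma sensing_bounds: "0 \<le> sensing x r y" "r > 0 \<Longrightarrow> sensing x r y \<le> 1"
  unfolding sensing_def by (auto simp: max_def)

lemma h_nonpos_Aneg:
  assumes "B > A" "A \<le> 0" "r > 0"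
  shows "A - B * sensing x r y \<le> 0"
proof -
  have "0 \<le> sensing x r y" "sensing x r y \<le> 1" using sensing_bounds assms(3) by auto
  moreover have "A * (1 - sensing x r y) \<le> 0" using calculation assms by (intro mult_nonpos_nonneg) auto
  moreover have "(A - B) * sensing x r y \<le> 0" using calculation assms by (intro mult_nonpos_nonneg) auto
  ultimately show ?thesis by (simp add: algebra_simps)
qed

lemma h_sign_far:
  assumes "B > A" "A > 0" "r > 0" "(norm (y - x))^2 \<ge> r^2 * (1 - A / B)"
  shows "A - B * sensing x r y \<ge> 0"
proof -
  have B: "B > 0" using assms by auto
  have "(norm (y - x))^2 / r^2 \<ge> 1 - A / B" using assms(3,4) by (simp add: field_simps)
  then have "1 - (norm (y - x))^2 / r^2 \<le> A / B" by simp
  moreover have "A / B > 0" using B assms by simp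
  ultimately have "sensing x r y \<le> A / B" unfolding sensing_def by simp
  then have "B * sensing x r y \<le> A" using B by (simp add: field_simps)
  then show ?thesis by simp
qed

lemma h_sign_near:
  assumes "B > A" "A > 0" "r > 0" "(norm (y - x))^2 \<le> r^2 * (1 - A / B)"
  shows "A - B * sensing x r y \<le> 0"
proof -
  have B: "B > 0" using assms by auto
  have "(norm (y - x))^2 / r^2 \<le> 1 - A / B" using assms(3,4) by (simp add: field_simps)
  then have "1 - (norm (y - x))^2 / r^2 \<ge> A / B" by simp
  then have "sensing x r y \<ge> A / B" unfolding sensing_def by simp
  then have "B * sensing x r y \<ge> A" using B by (simp add: field_simps)
  then show ?thesis by simp
qed

lemma norm_line_sq:
  fixes w e :: "real^2"
  shows "(norm (w + \<sigma> *\<^sub>R e))^2 = (norm w)^2 + 2 * \<sigma> * (w \<bullet> e) + \<sigma>^2 * (norm e)^2"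
  by (simp only: power2_norm_eq_inner) (simp add: inner_add_left inner_add_right inner_commute algebra_simps power2_eq_square)

lemma geom:
  fixes s0 e x :: "real^2"
  assumes "B > A" "r > 0" "norm e = 1 \<or> e = 0"
  shows "\<exists>c1 c2. \<forall>\<sigma>\<in>{0..L}.
     (\<sigma> < c1 \<or> \<sigma> > c2 \<longrightarrow> A - B * sensing x r (s0 + \<sigma> *\<^sub>R e) \<ge> 0) \<and>
     (c1 < \<sigma> \<and> \<sigma> < c2 \<longrightarrow> A - B * sensing x r (s0 + \<sigma> *\<^sub>R e) \<le> 0)"
proof (cases "A \<le> 0")
  case True
  show ?thesis
    by (rule exI[of _ "-1"], rule exI[of _ "L+1"]) (use h_nonpos_Aneg[OF assms(1) True assms(2)] in auto)
next
  case False
  then have A: "A > 0" by simp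
  define \<rho> where "\<rho> = r^2 * (1 - A / B)"
  define w where "w = s0 - x"
  have eqn: "s0 + \<sigma> *\<^sub>R e - x = w + \<sigma> *\<^sub>R e" for \<sigma> by (simp add: w_def algebra_simps)
  have far: "A - B * sensing x r (s0 + \<sigma> *\<^sub>R e) \<ge> 0" if "(norm (w + \<sigma> *\<^sub>R e))^2 \<ge> \<rho>" for \<sigma>
    using h_sign_far[OF assms(1) A assms(2)] that eqn unfolding \<rho>_def by metis
  have near: "A - B * sensing x r (s0 + \<sigma> *\<^sub>R e) \<le> 0" if "(norm (w + \<sigma> *\<^sub>R e))^2 \<le> \<rho>" for \<sigma>
    using h_sign_near[OF assms(1) A assms(2)] that eqn unfolding \<rho>_def by metis
  show ?thesis
  proof (cases "e = 0")
    case True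
    show ?thesis
    proof (cases "(norm w)^2 \<le> \<rho>")
      case True
      show ?thesis
        by (rule exI[of _ "-1"], rule exI[of _ "L+1"]) (use near True \<open>e = 0\<close> in auto)
    next
      case False
      show ?thesis
        by (rule exI[of _ "-1"], rule exI[of _ "-1"]) (use far False \<open>e = 0\<close> in auto)
    qed
  next
    case False
    then have ne: "norm e = 1" using assms(3) by auto
    define \<beta> where "\<beta> = w \<bullet> e"
    define \<Delta> where "\<Delta> = \<beta>^2 - (norm w)^2 + \<rho>"
    have nq: "(norm (w + \<sigma> *\<^sub>R e))^2 = (\<sigma> + \<beta>)^2 + \<rho> - \<Delta>" for \<sigma>
      unfolding norm_line_sq ne \<Delta>_def \<beta>_def by (simp add: power2_eq_square algebra_simps)
    show ?thesis
    proof (cases "\<Delta> < 0")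
      case True
      show ?thesis
      proof (rule exI[of _ "-1"], rule exI[of _ "-1"], intro ballI conjI impI)
        fix \<sigma> :: real assume "\<sigma> \<in> {0..L}"
        have "(norm (w + \<sigma> *\<^sub>R e))^2 \<ge> \<rho>" unfolding nq using True
          by (smt (verit) zero_le_power2)
        then show "A - B * sensing x r (s0 + \<sigma> *\<^sub>R e) \<ge> 0" by (rule far)
      qed auto
    next
      case False
      define q where "q = sqrt \<Delta>"
      have q: "q \<ge> 0" "q^2 = \<Delta>" using False by (auto simp: q_def)
      show ?thesis
      proof (rule exI[of _ "-\<beta> - q"], rule exI[of _ "-\<beta> + q"], intro ballI conjI impI)
        fix \<sigma> :: real assume "\<sigma> \<in> {0..L}"
        {
          assume "\<sigma> < - \<beta> - q \<or> - \<beta> + q < \<sigma>"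
          then have "q < \<bar>\<sigma> + \<beta>\<bar>" by auto
          then have "q^2 \<le> (\<sigma> + \<beta>)^2" using q(1)
            by (metis abs_ge_zero less_imp_le power2_abs power_mono)
          then have "(norm (w + \<sigma> *\<^sub>R e))^2 \<ge> \<rho>" unfolding nq using q by simp
          then show "A - B * sensing x r (s0 + \<sigma> *\<^sub>R e) \<ge> 0" by (rule far)
        }
        {
          assume "- \<beta> - q < \<sigma> \<and> \<sigma> < - \<beta> + q"
          then have "\<bar>\<sigma> + \<beta>\<bar> \<le> q" by auto
          then have "(\<sigma> + \<beta>)^2 \<le> q^2"
            by (metis abs_ge_zero power2_abs power_mono)
          then have "(norm (w + \<sigma> *\<^sub>R e))^2 \<le> \<rho>" unfolding nq using q by simp
          then show "A - B * sensing x r (s0 + \<sigma> *\<^sub>R e) \<le> 0" by (rule near)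
        }
      qed
    qed
  qed
qed



lemma fR_bound: "r > 0 \<Longrightarrow> \<bar>fR A B x r Q y\<bar> \<le> \<bar>A\<bar> + \<bar>B\<bar>"
proof -
  assume r: "r > 0"
  have p: "0 \<le> sensing x r y" "sensing x r y \<le> 1" using sensing_bounds r by auto
  have "\<bar>B * sensing x r y\<bar> \<le> \<bar>B\<bar>" using p by (simp add: abs_mult mult_left_le)
  then have "\<bar>A - B * sensing x r y\<bar> \<le> \<bar>A\<bar> + \<bar>B\<bar>" by linarith
  then show ?thesis unfolding fR_def by auto
qed

lemma unit_eq:
  fixes a e :: "real^2"
  assumes "norm a \<le> 1" "norm e = 1" "e \<bullet> a = 1"
  shows "a = e"
proof -
  have "(norm (a - e))^2 = (norm a)^2 - 2 * (e \<bullet> a) + (norm e)^2"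
    by (simp only: power2_norm_eq_inner) (simp add: inner_diff_left inner_diff_right inner_commute)
  moreover have "(norm a)^2 \<le> 1" using assms(1) by (simp add: power_le_one)
  ultimately have "(norm (a - e))^2 \<le> 0" using assms(2,3) by simp
  then have "norm (a - e) = 0" by simp
  then show ?thesis by simp
qed

theorem lemma1:
  fixes A B r Rc T t0 :: real and x sphi spsi :: "real^2"
    and u s :: "real \<Rightarrow> real^2" and R :: "real \<Rightarrow> real"
  assumes "r > 0" and "B > A"
    and "draining_optimal A B x r sphi spsi Rc T u s R"
    and "t0 \<in> {0<..<T}" and "R t0 = 0"
  shows "AE t in lebesgue_on {t0<..<T}.
           u t = (1 / norm (spsi - s t0)) *\<^sub>R (spsi - s t0)"
proof -
  have feas: "draining_feasible A B x r sphi spsi Rc T u s R"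
   and opt: "\<And>T' u' s' R'. draining_feasible A B x r sphi spsi Rc T' u' s' R' \<Longrightarrow> T \<le> T'"
    using assms(3) unfolding draining_optimal_def by auto
  note F = feas[unfolded draining_feasible_def]
  have uai: "u absolutely_integrable_on {0..T}" and ub: "\<forall>t\<in>{0..T}. (norm (u t))^2 \<le> 1"
    and seq: "\<forall>t\<in>{0..T}. s t = sphi + integral {0..t} u"
    and fai: "(\<lambda>t. fR A B x r (R t) (s t)) absolutely_integrable_on {0..T}"
    and Req: "\<forall>t\<in>{0..T}. R t = Rc + integral {0..t} (\<lambda>\<tau>. fR A B x r (R \<tau>) (s \<tau>))"
    and Rnn: "\<forall>t\<in>{0..T}. 0 \<le> R t" and s0: "s 0 = sphi" and sT: "s T = spsi" and R0: "R 0 = Rc"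
    using F by (blast+)
  have t0: "0 < t0" "t0 < T" using assms(4) by auto
  have unorm: "norm (u t) \<le> 1" if "t \<in> {0..T}" for t
  proof -
    have "(norm (u t))^2 \<le> 1^2" using ub that by simp
    then show ?thesis by (rule power2_le_imp_le) simp
  qed
  have uint: "u integrable_on {0..T}" using uai absolutely_integrable_on_def by blast
  have fint: "(\<lambda>t. fR A B x r (R t) (s t)) integrable_on {0..T}"
    using fai absolutely_integrable_on_def by blast
  define s0 where "s0 = s t0"
  define v where "v = spsi - s0"
  define d where "d = norm v"
  define e where "e = (1/d) *\<^sub>R v"
  have ne: "norm e = 1 \<or> e = 0" by (cases "d = 0") (auto simp: e_def d_def)
  have de: "d *\<^sub>R e = v" by (cases "d = 0") (auto simp: e_def d_def)
  have d0: "d \<ge> 0" by (simp add: d_def)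
  define T' where "T' = t0 + d"
  define h where "h \<tau> = A - B * sensing x r (s0 + (\<tau> - t0) *\<^sub>R e)" for \<tau>
  have hc: "continuous_on {t0..T'} h"
    unfolding h_def sensing_def by (intro continuous_intros) (use assms(1) in auto)
  obtain c1 c2 where cc: "\<forall>\<sigma>\<in>{0..d}.
     (\<sigma> < c1 \<or> \<sigma> > c2 \<longrightarrow> A - B * sensing x r (s0 + \<sigma> *\<^sub>R e) \<ge> 0) \<and>
     (c1 < \<sigma> \<and> \<sigma> < c2 \<longrightarrow> A - B * sensing x r (s0 + \<sigma> *\<^sub>R e) \<le> 0)"
    using geom[OF assms(2,1) ne, of d x s0] by blast
  have "\<exists>Q. solves h t0 T' 0 Q"
  proof (rule ode_exists[of t0 T' h "c1+t0" "c2+t0"])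
    show "t0 \<le> T'" using d0 by (simp add: T'_def)
    show "continuous_on {t0..T'} h" by (rule hc)
  next
    fix \<tau> assume "\<tau> \<in> {t0..T'}" "\<tau> < c1 + t0 \<or> c2 + t0 < \<tau>"
    then show "0 \<le> h \<tau>" using cc[rule_format, of "\<tau> - t0"] by (auto simp: h_def T'_def)
  next
    fix \<tau> assume "\<tau> \<in> {t0..T'}" "c1 + t0 < \<tau>" "\<tau> < c2 + t0"
    then show "h \<tau> \<le> 0" using cc[rule_format, of "\<tau> - t0"] by (auto simp: h_def T'_def)
  qed
  then obtain Q where Q: "solves h t0 T' 0 Q" by blast
  have Qt0: "Q t0 = 0" and Qnn: "\<forall>t\<in>{t0..T'}. Q t \<ge> 0"
    and Qeq: "\<forall>t\<in>{t0..T'}. (FF h Q has_integral (Q t - 0)) {t0..t}"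
    using Q by (auto simp: solves_def)
  define u' where "u' t = (if t \<le> t0 then u t else e)" for t
  define s' where "s' t = (if t \<le> t0 then s t else s0 + (t - t0) *\<^sub>R e)" for t
  define R' where "R' t = (if t \<le> t0 then R t else Q t)" for t
  have t0T': "t0 \<le> T'" using d0 by (simp add: T'_def)
  have Rt0: "R t0 = Q t0" using assms(5) Qt0 by simp
  have uI: "(u has_integral integral {0..t} u) {0..t}" if "0 \<le> t" "t \<le> T" for t
    using integrable_on_subinterval[OF uint, of 0 t] that by (intro integrable_integral) auto
  have u'1: "(u' has_integral integral {0..t} u) {0..t}" if "0 \<le> t" "t \<le> t0" for t
    by (rule has_integral_eq[where f=u]) (use that t0 uI[of t] in \<open>auto simp: u'_def\<close>)
  have u'2: "(u' has_integral (integral {0..t0} u + (t - t0) *\<^sub>R e)) {0..t}" if "t0 \<le> t" for t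
  proof (rule has_integral_combine[of 0 t0 t])
    show "0 \<le> t0" "t0 \<le> t" using t0 that by auto
    show "(u' has_integral integral {0..t0} u) {0..t0}" using u'1[of t0] t0 by simp
    have "((\<lambda>_. e) has_integral (t - t0) *\<^sub>R e) {t0..t}"
      using has_integral_const_real[of e t0 t] that by simp
    then show "(u' has_integral (t - t0) *\<^sub>R e) {t0..t}"
      by (intro has_integral_spike_finite[of "{t0}" _ u' "\<lambda>_. e"]) (auto simp: u'_def)
  qed
  have u'n: "norm (u' t) \<le> 1" if "t \<in> {0..T'}" for t
    using that unorm[of t] t0 ne by (auto simp: u'_def)
  define fo where "fo \<tau> = fR A B x r (R \<tau>) (s \<tau>)" for \<tau>
  define fn where "fn \<tau> = fR A B x r (R' \<tau>) (s' \<tau>)" for \<tau>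
  have fo_eq: "fo = (\<lambda>\<tau>. fR A B x r (R \<tau>) (s \<tau>))" by (rule ext) (simp add: fo_def)
  have fn_eq: "fn = (\<lambda>\<tau>. fR A B x r (R' \<tau>) (s' \<tau>))" by (rule ext) (simp add: fn_def)
  have fn_lo: "fn \<tau> = fo \<tau>" if "\<tau> \<le> t0" for \<tau> using that by (simp add: fn_def fo_def R'_def s'_def)
  have fn_hi: "fn \<tau> = FF h Q \<tau>" if "t0 \<le> \<tau>" for \<tau>
  proof -
    have "R' \<tau> = Q \<tau>" using that Rt0 by (cases "\<tau> = t0") (auto simp: R'_def)
    moreover have "s' \<tau> = s0 + (\<tau> - t0) *\<^sub>R e" using that by (cases "\<tau> = t0") (auto simp: s'_def s0_def)
    ultimately show ?thesis by (simp add: fn_def FF_def h_def fR_def)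
  qed
  have foint: "fo integrable_on {0..T}" using fint fo_eq by simp
  have foI: "(fo has_integral integral {0..t} fo) {0..t}" if "0 \<le> t" "t \<le> T" for t
    using integrable_on_subinterval[OF foint, of 0 t] that by (intro integrable_integral) auto
  have fn1: "(fn has_integral integral {0..t} fo) {0..t}" if "0 \<le> t" "t \<le> t0" for t
    by (rule has_integral_eq[where f=fo]) (use that t0 foI[of t] fn_lo in auto)
  have fo_t0: "integral {0..t0} fo = - Rc" using Req t0 assms(5) unfolding fo_eq by force
  have fn2: "(fn has_integral (- Rc + Q t)) {0..t}" if "t0 \<le> t" "t \<le> T'" for t
  proof (rule has_integral_combine[of 0 t0 t])
    show "0 \<le> t0" "t0 \<le> t" using t0 that by auto
    show "(fn has_integral - Rc) {0..t0}" using fn1[of t0] t0 fo_t0 by simp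
    have "(FF h Q has_integral Q t) {t0..t}" using Qeq that by auto
    then show "(fn has_integral Q t) {t0..t}"
      by (rule has_integral_eq[rotated]) (use fn_hi in auto)
  qed
  have one_int: "(\<lambda>_. c::real) integrable_on {0..T'}" for c
    using has_integral_const_real[of c 0 T'] by blast
  have feas': "draining_feasible A B x r sphi spsi Rc T' u' s' R'"
    unfolding draining_feasible_def
  proof (intro conjI ballI)
    show "0 \<le> T'" using t0 t0T' by simp
    show "u' absolutely_integrable_on {0..T'}"
    proof (rule absolutely_integrable_integrable_bound[where g="\<lambda>_. 1"])
      show "u' integrable_on {0..T'}" using u'2[OF t0T'] by blast
    qed (use u'n one_int in auto)
  next
    fix t assume t: "t \<in> {0..T'}"
    show "(norm (u' t))^2 \<le> 1" using u'n[OF t] by (simp add: power_le_one)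
    show "s' t = sphi + integral {0..t} u'"
    proof (cases "t \<le> t0")
      case True
      then show ?thesis using integral_unique[OF u'1[of t]] t seq t0 by (auto simp: s'_def)
    next
      case False
      then show ?thesis using integral_unique[OF u'2[of t]] seq t0 by (auto simp: s'_def s0_def)
    qed
    show "R' t = Rc + integral {0..t} (\<lambda>\<tau>. fR A B x r (R' \<tau>) (s' \<tau>))"
    proof (cases "t \<le> t0")
      case True
      have "R' t = R t" using True by (simp add: R'_def)
      moreover have "R t = Rc + integral {0..t} fo" using Req t t0 True fo_eq by auto
      moreover have "integral {0..t} fn = integral {0..t} fo" using integral_unique[OF fn1[of t]] t True by auto
      ultimately show ?thesis unfolding fn_eq by simp
    next
      case False
      have "R' t = Q t" using False by (simp add: R'_def)
      moreover have "integral {0..t} fn = - Rc + Q t" using integral_unique[OF fn2[of t]] t False by auto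
      ultimately show ?thesis unfolding fn_eq by simp
    qed
    show "0 \<le> R' t" using t Rnn Qnn t0 by (auto simp: R'_def)
  next
    show "(\<lambda>t. fR A B x r (R' t) (s' t)) absolutely_integrable_on {0..T'}"
    proof (rule absolutely_integrable_integrable_bound[where g="\<lambda>_. \<bar>A\<bar> + \<bar>B\<bar>"])
      show "(\<lambda>t. fR A B x r (R' t) (s' t)) integrable_on {0..T'}"
        using fn2[OF t0T' order_refl] unfolding fn_eq by blast
    qed (use one_int fR_bound[OF assms(1)] in auto)
    show "\<exists>t\<in>{0..T'}. R' t = 0" using t0 t0T' assms(5) by (auto simp: R'_def intro!: bexI[of _ t0])
    show "s' 0 = sphi" using s0 t0 by (simp add: s'_def)
    show "R' 0 = Rc" using R0 t0 by (simp add: R'_def)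
    show "s' T' = spsi"
    proof (cases "T' \<le> t0")
      case True
      then have "d = 0" "T' = t0" using d0 by (auto simp: T'_def)
      then show ?thesis by (simp add: s'_def s0_def d_def v_def)
    next
      case False
      then show ?thesis using de by (simp add: s'_def T'_def v_def)
    qed
  qed
  have "T \<le> T'" by (rule opt[OF feas'])
  then have dT: "T - t0 \<le> d" by (simp add: T'_def)
  then have dpos: "d > 0" using t0 by simp
  have ne1: "norm e = 1" using dpos by (simp add: e_def d_def)
  have ev: "e \<bullet> v = d"
  proof -
    have "v \<bullet> v = d^2" by (simp add: d_def power2_norm_eq_inner)
    then show ?thesis using dpos by (simp add: e_def power2_eq_square)
  qed
  have uIt: "(u has_integral v) {t0..T}"
  proof -
    have "integral {0..t0} u + integral {t0..T} u = integral {0..T} u"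
      using Henstock_Kurzweil_Integration.integral_combine[where a=0 and c=t0 and b=T and f=u] uint t0 by auto
    moreover have "spsi = sphi + integral {0..T} u" using seq sT t0 by auto
    moreover have "s0 = sphi + integral {0..t0} u" using seq t0 by (auto simp: s0_def)
    ultimately have "integral {t0..T} u = v" by (simp add: v_def algebra_simps)
    moreover have "u integrable_on {t0..T}" using integrable_on_subinterval[OF uint, of t0 T] t0 by auto
    ultimately show ?thesis by (metis has_integral_integrable_integral)
  qed
  define g where "g t = 1 - e \<bullet> u t" for t
  have geq: "g = (\<lambda>t. 1 - ((\<lambda>y. e \<bullet> y) \<circ> u) t)" by (rule ext) (simp add: g_def)
  have gI: "(g has_integral ((T - t0) - d)) {t0..T}"
  proof -
    have a: "(((\<lambda>y. e \<bullet> y) \<circ> u) has_integral d) {t0..T}"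
      using has_integral_linear[OF uIt bounded_linear_inner_right[of e]] ev by simp
    have b: "((\<lambda>_. 1::real) has_integral (T - t0)) {t0..T}"
      using has_integral_const_real[of "1::real" t0 T] t0 by simp
    show ?thesis unfolding geq by (rule has_integral_diff[OF b a])
  qed
  have gnn: "g t \<ge> 0" if "t \<in> {0..T}" for t
  proof -
    have "e \<bullet> u t \<le> norm e * norm (u t)" by (rule norm_cauchy_schwarz)
    also have "\<dots> \<le> 1" using ne1 unorm[OF that] by simp
    finally show ?thesis by (simp add: g_def)
  qed
  have "(T - t0) - d \<ge> 0"
    by (rule has_integral_nonneg[OF gI]) (use gnn t0 in auto)
  then have "(T - t0) - d = 0" using dT by simp
  then have gI0: "(g has_integral 0) {t0<..<T}" using gI has_integral_Icc_iff_Ioo by metis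
  define S where "S = {t0<..<T}"
  have gnnS: "g t \<ge> 0" if "t \<in> S" for t using gnn that t0 by (auto simp: S_def)
  have Sl: "S \<in> sets lebesgue" by (simp add: S_def)
  have gabs: "g absolutely_integrable_on S"
    by (rule absolutely_integrable_integrable_bound[where g=g]) (use gnnS gI0 S_def in auto)
  have gL: "integrable (lebesgue_on S) g"
    using gabs Sl by (simp add: set_integrable_def integrable_restrict_space)
  have "integral\<^sup>L (lebesgue_on S) g = 0"
    using has_integral_integral_lebesgue_on[OF gL Sl] gI0 has_integral_unique S_def by blast
  moreover have aen: "AE t in lebesgue_on S. 0 \<le> g t"
    using Sl by (subst AE_restrict_space_iff) (auto intro: AE_I2 gnnS)
  ultimately have ae0: "AE t in lebesgue_on S. g t = 0"
    using integral_nonneg_eq_0_iff_AE[OF gL aen] by simp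
  have aeS: "AE t in lebesgue_on S. t \<in> S"
    using Sl by (subst AE_restrict_space_iff) (auto intro: AE_I2)
  have eq: "(1 / norm (spsi - s t0)) *\<^sub>R (spsi - s t0) = e" by (simp add: e_def d_def v_def s0_def)
  from ae0 aeS have "AE t in lebesgue_on S. u t = e"
  proof eventually_elim
    case (elim t)
    then have "t \<in> {0..T}" using t0 by (auto simp: S_def)
    then show ?case using unit_eq[OF unorm ne1] elim by (auto simp: g_def)
  qed
  then show ?thesis using eq unfolding S_def by simp
qed

end
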